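(* Let $\mathbf{u}\in\mathbb{R}^d$ with $\|\mathbf{u}\|_2=1$ and $\alpha\in\mathbb{C}$ with $\Re(\alpha)<0$. Define the generalized function $\rho_{\mathbf{u},\alpha}$ by $\langle\rho_{\mathbf{u},\alpha},\varphi\rangle=\int_0^{+\infty}\mathrm{e}^{\alpha t}\varphi(t\mathbf{u})\,\mathrm{d}t$ and the operator $I_{\mathbf{u},\alpha}\varphi=\rho_{\mathbf{u},\alpha}*\varphi$ for $\varphi\in\mathcal{S}(\mathbb{R}^d)$. Then $I_{\mathbf{u},\alpha}$ is linear, shift-invariant and continuous from $\mathcal{S}$ to $\mathcal{S}$, and it is the inverse of $\mathrm{D}_{\mathbf{u}}-\alpha\mathrm{Id}$ on $\mathcal{S}$: for all $\varphi\in\mathcal{S}$, $I_{\mathbf{u},\alpha}(\mathrm{D}_{\mathbf{u}}-\alpha\mathrm{Id})\varphi=(\mathrm{D}_{\mathbf{u}}-\alpha\mathrm{Id})I_{\mathbf{u},\alpha}\varphi=\varphi$.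
   Context: $\mathcal{S}(\mathbb{R}^d)$ here denotes the (complex-valued) Schwartz space. $\mathrm{D}_{\mathbf{u}}\varphi=\langle\nabla\varphi,\mathbf{u}\rangle=u_1\partial_1\varphi+\dots+u_d\partial_d\varphi$ is the directional derivative. *)

theory Defs
  imports "HOL-Analysis.Analysis"
begin

text \<open>R^d is modelled by an arbitrary euclidean space 'a; functions are complex-valued.\<close>

definition dir_deriv :: "'a::euclidean_space \<Rightarrow> ('a \<Rightarrow> complex) \<Rightarrow> 'a \<Rightarrow> complex" where
  "dir_deriv u f = (\<lambda>x. frechet_derivative f (at x) u)"

fun iter_deriv :: "'a::euclidean_space list \<Rightarrow> ('a \<Rightarrow> complex) \<Rightarrow> 'a \<Rightarrow> complex" where
  "iter_deriv [] f = f"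
| "iter_deriv (v # vs) f = dir_deriv v (iter_deriv vs f)"

definition schwartz :: "('a::euclidean_space \<Rightarrow> complex) set" where
  "schwartz = {f. \<forall>vs. set vs \<subseteq> Basis \<longrightarrow>
      (\<forall>x. iter_deriv vs f differentiable (at x)) \<and>
      (\<forall>N::nat. bounded (range (\<lambda>x. (1 + norm x) ^ N * cmod (iter_deriv vs f x))))}"

definition schwartz_seminorm :: "nat \<Rightarrow> 'a::euclidean_space list \<Rightarrow> ('a \<Rightarrow> complex) \<Rightarrow> real" where
  "schwartz_seminorm N vs f = (SUP x. (1 + norm x) ^ N * cmod (iter_deriv vs f x))"

text \<open>Continuity of a linear operator S -> S w.r.t. the Frechet topology of S:
  every seminorm of the image is bounded by a finite combination of seminorms.\<close>
definition schwartz_continuous :: "(('a::euclidean_space \<Rightarrow> complex) \<Rightarrow> ('a \<Rightarrow> complex)) \<Rightarrow> bool" where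
  "schwartz_continuous T \<longleftrightarrow>
    (\<forall>N vs. set vs \<subseteq> Basis \<longrightarrow>
      (\<exists>M k C. \<forall>f\<in>schwartz.
         schwartz_seminorm N vs (T f) \<le>
           C * (\<Sum>(N', ws)\<in>{..M} \<times> {ws. set ws \<subseteq> Basis \<and> length ws \<le> k}.
                  schwartz_seminorm N' ws f)))"

definition rho :: "'a::euclidean_space \<Rightarrow> complex \<Rightarrow> ('a \<Rightarrow> complex) \<Rightarrow> complex" where
  "rho u \<alpha> \<phi> = (LINT t:{0..}|lborel. exp (\<alpha> * complex_of_real t) * \<phi> (t *\<^sub>R u))"

definition gconv :: "(('a::euclidean_space \<Rightarrow> complex) \<Rightarrow> complex) \<Rightarrow> ('a \<Rightarrow> complex) \<Rightarrow> 'a \<Rightarrow> complex" where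
  "gconv T \<phi> = (\<lambda>x. T (\<lambda>y. \<phi> (x - y)))"

definition I_op :: "'a::euclidean_space \<Rightarrow> complex \<Rightarrow> ('a \<Rightarrow> complex) \<Rightarrow> 'a \<Rightarrow> complex" where
  "I_op u \<alpha> \<phi> = gconv (rho u \<alpha>) \<phi>"

end

theory Submission
  imports Defs
begin


lemma exp_integ:
  fixes a :: real assumes "0 < a"
  shows "set_integrable lborel {0..} (\<lambda>t::real. exp (- a * t))"
proof -
  have "(\<lambda>t::real. exp (- a * t)) integrable_on {0..}"
    using integrable_on_exp_minus_to_infinity[OF assms] by simp
  then have "(\<lambda>t::real. exp (- a * t)) absolutely_integrable_on {0..}"
    by (rule nonnegative_absolutely_integrable_1) auto
  then have "integrable lebesgue (\<lambda>t. indicator {0::real..} t *\<^sub>R exp (- a * t))"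
    by (simp add: set_integrable_def)
  moreover have "(\<lambda>t. indicator {0::real..} t *\<^sub>R exp (- a * t)) \<in> borel_measurable lborel"
    by measurable
  ultimately show ?thesis
    unfolding set_integrable_def using integrable_completion by blast
qed

lemma poly_exp_bound:
  fixes c :: real assumes "0 < c" 
  shows "\<exists>K. \<forall>t\<ge>0. (1 + t) ^ N * exp (- c * t) \<le> K * exp (- (c/2) * t)"
proof -
  define e where "e = min 1 (c / (2 * (real N + 1)))"
  have e0: "0 < e" "e \<le> 1" using assms by (auto simp: e_def)
  have eN: "e * real N \<le> c / 2"
  proof -
    have "e * real N \<le> (c / (2 * (real N + 1))) * real N"
      by (intro mult_right_mono) (auto simp: e_def)
    also have "\<dots> \<le> c / 2" using assms by (simp add: field_simps)
    finally show ?thesis .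
  qed
  show ?thesis
  proof (intro exI allI impI)
    fix t :: real assume t: "0 \<le> t"
    have "1 + t \<le> exp (e * t) / e"
    proof -
      have "e * (1 + t) \<le> 1 + e * t" using e0 t by (simp add: algebra_simps)
      also have "\<dots> \<le> exp (e * t)" by (rule exp_ge_add_one_self)
      finally show ?thesis using e0 by (simp add: field_simps)
    qed
    then have "(1 + t) ^ N \<le> (exp (e * t) / e) ^ N"
      using t by (intro power_mono) auto
    also have "\<dots> = exp ((e * real N) * t) / e ^ N"
      by (simp add: power_divide exp_of_nat_mult[symmetric] mult_ac)
    also have "\<dots> \<le> exp ((c/2) * t) / e ^ N"
      using mult_right_mono[OF eN t] e0 by (intro divide_right_mono) auto
    finally have "(1 + t) ^ N * exp (- c * t) \<le> exp ((c/2) * t) / e ^ N * exp (- c * t)"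
      by (intro mult_right_mono) auto
    also have "\<dots> = (1 / e ^ N) * exp (- (c/2) * t)"
      by (simp add: exp_add[symmetric] field_simps)
    finally show "(1 + t) ^ N * exp (- c * t) \<le> (1 / e ^ N) * exp (- (c/2) * t)" .
  qed
qed

lemma weight_integ:
  fixes c :: real assumes "0 < c"
  shows "set_integrable lborel {0..} (\<lambda>t::real. (1 + t) ^ N * exp (- c * t))"
proof -
  obtain K where K: "\<And>t. t \<ge> 0 \<Longrightarrow> (1 + t) ^ N * exp (- c * t) \<le> K * exp (- (c/2) * t)"
    using poly_exp_bound[OF assms] by blast
  show ?thesis
  proof (rule set_integrable_bound)
    show "set_integrable lborel {0..} (\<lambda>t. K * exp (- (c/2) * t))"
      using exp_integ[of "c/2"] assms by simp
    show "set_borel_measurable lborel {0..} (\<lambda>t::real. (1 + t) ^ N * exp (- c * t))"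
      unfolding set_borel_measurable_def by measurable
    show "AE x in lborel. x \<in> {0..} \<longrightarrow> norm ((1 + x) ^ N * exp (- c * x)) \<le> norm (K * exp (- (c/2) * x))"
    proof (rule AE_I2, rule impI)
      fix x :: real assume "x \<in> {0..}"
      then have x: "0 \<le> x" by simp
      have "0 \<le> (1 + x) ^ N * exp (- c * x)" using x by simp
      moreover have "0 \<le> K * exp (- (c/2) * x)" using K[OF x] \<open>0 \<le> (1 + x) ^ N * exp (- c * x)\<close> by linarith
      ultimately show "norm ((1 + x) ^ N * exp (- c * x)) \<le> norm (K * exp (- (c/2) * x))"
        using K[OF x] by simp
    qed
  qed
qed



lemma I_op_eq:
  "I_op u \<alpha> \<psi> x = (LINT t:{0..}|lborel. exp (\<alpha> * complex_of_real t) * \<psi> (x - t *\<^sub>R u))"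
  by (simp add: I_op_def gconv_def rho_def)

lemma cont_meas:
  fixes f :: "real \<Rightarrow> complex"
  assumes "continuous_on UNIV f"
  shows "set_borel_measurable lborel {0..} f"
  unfolding set_borel_measurable_def
  using borel_measurable_continuous_onI[OF assms] by measurable

lemma integ_cont:
  fixes \<psi> :: "'a::euclidean_space \<Rightarrow> complex"
  assumes "continuous_on UNIV \<psi>" "\<And>y. norm (\<psi> y) \<le> B" "Re \<alpha> < 0"
  shows "set_integrable lborel {0..} (\<lambda>t. exp (\<alpha> * complex_of_real t) * \<psi> (x - t *\<^sub>R u))"
proof (rule set_integrable_bound)
  show "set_integrable lborel {0..} (\<lambda>t. B * exp (- (- Re \<alpha>) * t))"
    using exp_integ[of "- Re \<alpha>"] assms(3) by simp
  have "continuous_on UNIV (\<lambda>t. exp (\<alpha> * complex_of_real t) * \<psi> (x - t *\<^sub>R u))"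
    by (intro continuous_intros continuous_on_compose2[OF assms(1)]) auto
  then show "set_borel_measurable lborel {0..} (\<lambda>t. exp (\<alpha> * complex_of_real t) * \<psi> (x - t *\<^sub>R u))"
    by (rule cont_meas)
  show "AE t in lborel. t \<in> {0..} \<longrightarrow> norm (exp (\<alpha> * complex_of_real t) * \<psi> (x - t *\<^sub>R u)) \<le> norm (B * exp (- (- Re \<alpha>) * t))"
  proof (rule AE_I2, rule impI)
    fix t :: real
    have "norm (exp (\<alpha> * complex_of_real t) * \<psi> (x - t *\<^sub>R u)) = exp (Re \<alpha> * t) * norm (\<psi> (x - t *\<^sub>R u))"
      by (simp add: norm_mult)
    also have "\<dots> \<le> exp (Re \<alpha> * t) * B" using assms(2) by (intro mult_left_mono) auto
    finally show "norm (exp (\<alpha> * complex_of_real t) * \<psi> (x - t *\<^sub>R u)) \<le> norm (B * exp (- (- Re \<alpha>) * t))"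
      by (simp add: mult.commute)
  qed
qed

definition W :: "complex \<Rightarrow> nat \<Rightarrow> real" where
  "W \<alpha> N = (LINT t:{0..}|lborel. (1 + t) ^ N * exp (- (- Re \<alpha>) * t))"

lemma weighted_bound:
  fixes \<psi> :: "'a::euclidean_space \<Rightarrow> complex"
  assumes u: "norm u = 1" and a: "Re \<alpha> < 0" and c: "continuous_on UNIV \<psi>"
    and S: "\<And>y. (1 + norm y) ^ N * norm (\<psi> y) \<le> S"
  shows "(1 + norm x) ^ N * norm (I_op u \<alpha> \<psi> x) \<le> S * W \<alpha> N"
proof -
  define f where "f t = exp (\<alpha> * complex_of_real t) * \<psi> (x - t *\<^sub>R u)" for t
  have B: "norm (\<psi> y) \<le> S" for y
  proof -
    have "1 * norm (\<psi> y) \<le> (1 + norm y) ^ N * norm (\<psi> y)"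
      by (intro mult_right_mono) auto
    then show ?thesis using S[of y] by simp
  qed
  have fi: "set_integrable lborel {0..} f"
    unfolding f_def by (rule integ_cont[OF c B a])
  have wi: "set_integrable lborel {0..} (\<lambda>t::real. (1 + t) ^ N * exp (- (- Re \<alpha>) * t))"
    using weight_integ[of "- Re \<alpha>" N] a by simp
  have xp: "0 < (1 + norm x) ^ N" by (intro zero_less_power) (smt (verit) norm_ge_zero)
  have pt: "norm (f t) \<le> S / (1 + norm x) ^ N * ((1 + t) ^ N * exp (- (- Re \<alpha>) * t))" if t: "t \<in> {0..}" for t
  proof -
    have t0: "0 \<le> t" using t by simp
    have "norm x \<le> norm (x - t *\<^sub>R u) + t"
      using norm_triangle_ineq[of "x - t *\<^sub>R u" "t *\<^sub>R u"] u t0 by simp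
    then have "1 + norm x \<le> (1 + norm (x - t *\<^sub>R u)) * (1 + t)"
      using t0 by (simp add: algebra_simps) (smt (verit) mult_nonneg_nonneg norm_ge_zero)
    then have "(1 + norm x) ^ N \<le> ((1 + norm (x - t *\<^sub>R u)) * (1 + t)) ^ N"
      by (intro power_mono) auto
    then have 1: "(1 + norm x) ^ N * norm (f t) \<le> ((1 + norm (x - t *\<^sub>R u)) * (1 + t)) ^ N * norm (f t)"
      by (intro mult_right_mono) auto
    have "norm (f t) = exp (Re \<alpha> * t) * norm (\<psi> (x - t *\<^sub>R u))"
      by (simp add: f_def norm_mult)
    then have "((1 + norm (x - t *\<^sub>R u)) * (1 + t)) ^ N * norm (f t)
       = ((1 + norm (x - t *\<^sub>R u)) ^ N * norm (\<psi> (x - t *\<^sub>R u))) * ((1 + t) ^ N * exp (Re \<alpha> * t))"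
      by (simp add: power_mult_distrib mult_ac)
    also have "\<dots> \<le> S * ((1 + t) ^ N * exp (Re \<alpha> * t))"
      using S t0 by (intro mult_right_mono) auto
    finally have "(1 + norm x) ^ N * norm (f t) \<le> S * ((1 + t) ^ N * exp (- (- Re \<alpha>) * t))"
      using 1 by simp
    then show ?thesis using xp by (simp add: field_simps)
  qed
  have "norm (I_op u \<alpha> \<psi> x) \<le> (LINT t:{0..}|lborel. norm (f t))"
    unfolding I_op_eq f_def[symmetric] by (rule set_integral_norm_bound[OF fi])
  also have "\<dots> \<le> (LINT t:{0..}|lborel. S / (1 + norm x) ^ N * ((1 + t) ^ N * exp (- (- Re \<alpha>) * t)))"
    by (rule set_integral_mono[OF set_integrable_norm[OF fi]]) (use wi pt in auto)
  also have "\<dots> = S / (1 + norm x) ^ N * W \<alpha> N"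
    by (simp add: W_def)
  finally show ?thesis using xp by (simp add: field_simps)
qed



lemma cont_of_diff:
  assumes "\<And>x. f differentiable (at x)"
  shows "continuous_on UNIV f"
  using assms by (intro differentiable_imp_continuous_on) (simp add: differentiable_on_def)

lemma fd_sum:
  fixes \<psi> :: "'a::euclidean_space \<Rightarrow> complex"
  assumes "\<psi> differentiable (at y)"
  shows "frechet_derivative \<psi> (at y) h = (\<Sum>i\<in>Basis. (h \<bullet> i) *\<^sub>R dir_deriv i \<psi> y)"
proof -
  have lin: "linear (frechet_derivative \<psi> (at y))"
    using assms frechet_derivative_works has_derivative_linear by blast
  have "frechet_derivative \<psi> (at y) h = frechet_derivative \<psi> (at y) (\<Sum>i\<in>Basis. (h \<bullet> i) *\<^sub>R i)"
    by (simp add: euclidean_representation)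
  also have "\<dots> = (\<Sum>i\<in>Basis. (h \<bullet> i) *\<^sub>R frechet_derivative \<psi> (at y) i)"
    by (simp add: linear_sum[OF lin] linear_scale[OF lin])
  finally show ?thesis by (simp add: dir_deriv_def)
qed

lemma sum_basis_bound:
  fixes c :: "'a::euclidean_space \<Rightarrow> complex"
  assumes "\<And>i. i \<in> Basis \<Longrightarrow> norm (c i) \<le> B"
  shows "norm (\<Sum>i\<in>(Basis::'a set). (k \<bullet> i) *\<^sub>R c i) \<le> real DIM('a) * B * norm k"
proof -
  have "norm (\<Sum>i\<in>(Basis::'a set). (k \<bullet> i) *\<^sub>R c i) \<le> (\<Sum>i\<in>(Basis::'a set). norm ((k \<bullet> i) *\<^sub>R c i))"
    by (rule norm_sum)
  also have "\<dots> \<le> (\<Sum>i\<in>(Basis::'a set). norm k * B)"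
  proof (rule sum_mono)
    fix i :: 'a assume i: "i \<in> Basis"
    have "norm ((k \<bullet> i) *\<^sub>R c i) = \<bar>k \<bullet> i\<bar> * norm (c i)" by simp
    also have "\<dots> \<le> norm k * B"
      using i assms[OF i] Basis_le_norm[OF i, of k] by (intro mult_mono) auto
    finally show "norm ((k \<bullet> i) *\<^sub>R c i) \<le> norm k * B" .
  qed
  also have "\<dots> = real DIM('a) * B * norm k" by simp
  finally show ?thesis .
qed

lemma lipschitz_dd:
  fixes g :: "'a::euclidean_space \<Rightarrow> complex"
  assumes d: "\<And>x. g differentiable (at x)"
    and B: "\<And>j y. j \<in> Basis \<Longrightarrow> norm (dir_deriv j g y) \<le> B2"
  shows "norm (g x - g y) \<le> (real DIM('a) * B2) * norm (x - y)"
proof (rule differentiable_bound[where S=UNIV and f'="\<lambda>z. frechet_derivative g (at z)"])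
  show "convex (UNIV::'a set)" by simp
  show "(g has_derivative frechet_derivative g (at z)) (at z within UNIV)" for z
    using d frechet_derivative_works by auto
  show "onorm (frechet_derivative g (at z)) \<le> real DIM('a) * B2" if "z \<in> UNIV" for z
  proof (rule onorm_le)
    fix k
    show "norm (frechet_derivative g (at z) k) \<le> real DIM('a) * B2 * norm k"
      unfolding fd_sum[OF d] by (rule sum_basis_bound) (use B in auto)
  qed
qed auto

lemma taylor2:
  fixes \<psi> :: "'a::euclidean_space \<Rightarrow> complex"
  assumes d: "\<And>x. \<psi> differentiable (at x)"
    and L0: "0 \<le> L" and L: "\<And>i x z. i \<in> Basis \<Longrightarrow> norm (dir_deriv i \<psi> x - dir_deriv i \<psi> z) \<le> L * norm (x - z)"
  shows "norm (\<psi> (y + h) - \<psi> y - (\<Sum>i\<in>Basis. (h \<bullet> i) *\<^sub>R dir_deriv i \<psi> y))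
           \<le> norm h * (real DIM('a) * L * norm h)"
proof -
  have "norm (\<psi> (y + h) - \<psi> y - frechet_derivative \<psi> (at y) ((y + h) - y))
           \<le> norm ((y + h) - y) * (real DIM('a) * L * norm h)"
  proof (rule differentiable_bound_linearization[where S="cball y (norm h)"])
    show "y + t *\<^sub>R (y + h - y) \<in> cball y (norm h)" if "t \<in> {0..1}" for t
      using that mult_right_mono[of t 1 "norm h"] by (auto simp: dist_norm)
    show "(\<psi> has_derivative frechet_derivative \<psi> (at x)) (at x within cball y (norm h))" for x
      using d frechet_derivative_works has_derivative_at_withinI by blast
    show "onorm (frechet_derivative \<psi> (at x) - frechet_derivative \<psi> (at y)) \<le> real DIM('a) * L * norm h"
      if x: "x \<in> cball y (norm h)" for x
    proof (rule onorm_le)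
      fix k
      have "(frechet_derivative \<psi> (at x) - frechet_derivative \<psi> (at y)) k
          = (\<Sum>i\<in>Basis. (k \<bullet> i) *\<^sub>R (dir_deriv i \<psi> x - dir_deriv i \<psi> y))"
        by (simp add: fd_sum[OF d] sum_subtractf[symmetric] scaleR_diff_right)
      also have "norm \<dots> \<le> real DIM('a) * (L * norm h) * norm k"
      proof (rule sum_basis_bound)
        fix i :: 'a assume i: "i \<in> Basis"
        have "norm (dir_deriv i \<psi> x - dir_deriv i \<psi> y) \<le> L * norm (x - y)" by (rule L[OF i])
        also have "\<dots> \<le> L * norm h"
          using x L0 by (intro mult_left_mono) (auto simp: dist_norm norm_minus_commute)
        finally show "norm (dir_deriv i \<psi> x - dir_deriv i \<psi> y) \<le> L * norm h" .
      qed
      finally show "norm ((frechet_derivative \<psi> (at x) - frechet_derivative \<psi> (at y)) k)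
            \<le> real DIM('a) * L * norm h * norm k" by (simp add: mult_ac)
    qed
  qed (auto)
  then show ?thesis by (simp add: fd_sum[OF d])
qed



lemma set_integral_sum:
  fixes f :: "'i \<Rightarrow> real \<Rightarrow> complex"
  assumes "finite I" "\<And>i. i \<in> I \<Longrightarrow> set_integrable M A (f i)"
  shows "set_integrable M A (\<lambda>x. \<Sum>i\<in>I. f i x) \<and> (LINT x:A|M. (\<Sum>i\<in>I. f i x)) = (\<Sum>i\<in>I. LINT x:A|M. f i x)"
proof -
  have z: "set_integrable M A (\<lambda>x. 0::complex)" by (simp add: set_integrable_def)
  show ?thesis using assms by (induction I rule: finite_induct) (auto simp: z)
qed

lemma I_has_derivative:
  fixes \<psi> :: "'a::euclidean_space \<Rightarrow> complex"
  assumes u: "norm u = 1" and a: "Re \<alpha> < 0"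
    and d\<psi>: "\<And>x. \<psi> differentiable (at x)"
    and dg: "\<And>i x. i \<in> Basis \<Longrightarrow> dir_deriv i \<psi> differentiable (at x)"
    and B0: "\<And>y. norm (\<psi> y) \<le> B0"
    and B1: "\<And>i y. i \<in> Basis \<Longrightarrow> norm (dir_deriv i \<psi> y) \<le> B1"
    and B2: "\<And>i j y. i \<in> Basis \<Longrightarrow> j \<in> Basis \<Longrightarrow> norm (dir_deriv j (dir_deriv i \<psi>) y) \<le> B2"
  shows "(I_op u \<alpha> \<psi> has_derivative (\<lambda>h. \<Sum>i\<in>Basis. (h \<bullet> i) *\<^sub>R I_op u \<alpha> (dir_deriv i \<psi>) x)) (at x)"
proof -
  define g where "g i = dir_deriv i \<psi>" for i
  define Lc where "Lc = real DIM('a) * B2"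
  obtain i0 :: 'a where i0: "i0 \<in> Basis" using nonempty_Basis by blast
  have "0 \<le> B2" using B2[OF i0 i0, of 0] norm_ge_zero order_trans by blast
  then have Lc0: "0 \<le> Lc" by (simp add: Lc_def)
  have Lip: "norm (g i y - g i z) \<le> Lc * norm (y - z)" if "i \<in> Basis" for i y z
    unfolding Lc_def g_def by (rule lipschitz_dd) (use dg B2 that in auto)
  define K where "K = real DIM('a) * Lc"
  define E where "E = (LINT t:{0..}|lborel. exp (- (- Re \<alpha>) * t))"
  have c\<psi>: "continuous_on UNIV \<psi>" by (rule cont_of_diff[OF d\<psi>])
  have cg: "continuous_on UNIV (g i)" if "i \<in> Basis" for i
    unfolding g_def by (rule cont_of_diff) (use dg that in auto)
  have ig: "set_integrable lborel {0..} (\<lambda>t. exp (\<alpha> * complex_of_real t) * g i (z - t *\<^sub>R u))"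
    if "i \<in> Basis" for i z
    by (rule integ_cont[OF cg[OF that] _ a]) (use B1 that in \<open>auto simp: g_def\<close>)
  have i\<psi>: "set_integrable lborel {0..} (\<lambda>t. exp (\<alpha> * complex_of_real t) * \<psi> (z - t *\<^sub>R u))" for z
    by (rule integ_cont[OF c\<psi> B0 a])
  have Ei: "set_integrable lborel {0..} (\<lambda>t::real. exp (- (- Re \<alpha>) * t))"
    using exp_integ[of "- Re \<alpha>"] a by simp
  have key: "norm (I_op u \<alpha> \<psi> (x + h) - I_op u \<alpha> \<psi> x - (\<Sum>i\<in>Basis. (h \<bullet> i) *\<^sub>R I_op u \<alpha> (g i) x))
      \<le> norm h * (K * norm h) * E" for h
  proof -
    define F where "F t = exp (\<alpha> * complex_of_real t) * \<psi> (x + h - t *\<^sub>R u)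
        - exp (\<alpha> * complex_of_real t) * \<psi> (x - t *\<^sub>R u)
        - (\<Sum>i\<in>Basis. (h \<bullet> i) *\<^sub>R (exp (\<alpha> * complex_of_real t) * g i (x - t *\<^sub>R u)))" for t
    have isum: "set_integrable lborel {0..} (\<lambda>t. \<Sum>i\<in>Basis. (h \<bullet> i) *\<^sub>R (exp (\<alpha> * complex_of_real t) * g i (x - t *\<^sub>R u)))
       \<and> (LINT t:{0..}|lborel. (\<Sum>i\<in>Basis. (h \<bullet> i) *\<^sub>R (exp (\<alpha> * complex_of_real t) * g i (x - t *\<^sub>R u))))
         = (\<Sum>i\<in>Basis. LINT t:{0..}|lborel. (h \<bullet> i) *\<^sub>R (exp (\<alpha> * complex_of_real t) * g i (x - t *\<^sub>R u)))"
      by (rule set_integral_sum) (use ig in auto)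
    have eq: "I_op u \<alpha> \<psi> (x + h) - I_op u \<alpha> \<psi> x - (\<Sum>i\<in>Basis. (h \<bullet> i) *\<^sub>R I_op u \<alpha> (g i) x)
        = (LINT t:{0..}|lborel. F t)"
      unfolding I_op_eq F_def
      using isum i\<psi>[of "x + h"] i\<psi>[of x]
      by (simp add: set_integral_diff)
    have Fi: "set_integrable lborel {0..} F"
      unfolding F_def using isum i\<psi>[of "x + h"] i\<psi>[of x] by (intro set_integral_diff) auto
    have Fb: "norm (F t) \<le> norm h * (K * norm h) * exp (- (- Re \<alpha>) * t)" for t
    proof -
      have "F t = exp (\<alpha> * complex_of_real t) * (\<psi> ((x - t *\<^sub>R u) + h) - \<psi> (x - t *\<^sub>R u)
           - (\<Sum>i\<in>Basis. (h \<bullet> i) *\<^sub>R dir_deriv i \<psi> (x - t *\<^sub>R u)))"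
        by (simp add: F_def g_def algebra_simps sum_distrib_left scaleR_conv_of_real)
      then have "norm (F t) = exp (Re \<alpha> * t) * norm (\<psi> ((x - t *\<^sub>R u) + h) - \<psi> (x - t *\<^sub>R u)
           - (\<Sum>i\<in>Basis. (h \<bullet> i) *\<^sub>R dir_deriv i \<psi> (x - t *\<^sub>R u)))"
        by (simp add: norm_mult)
      also have "\<dots> \<le> exp (Re \<alpha> * t) * (norm h * (real DIM('a) * Lc * norm h))"
        by (intro mult_left_mono taylor2[OF d\<psi> Lc0]) (use Lip in \<open>auto simp: g_def\<close>)
      finally show ?thesis by (simp add: K_def mult_ac)
    qed
    have "norm (LINT t:{0..}|lborel. F t) \<le> (LINT t:{0..}|lborel. norm (F t))"
      by (rule set_integral_norm_bound[OF Fi])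
    also have "\<dots> \<le> (LINT t:{0..}|lborel. norm h * (K * norm h) * exp (- (- Re \<alpha>) * t))"
      by (rule set_integral_mono[OF set_integrable_norm[OF Fi]]) (use Ei Fb in auto)
    also have "\<dots> = norm h * (K * norm h) * E" by (simp add: E_def)
    finally show ?thesis using eq by simp
  qed
  show ?thesis
    unfolding has_derivative_at_alt
  proof (intro conjI allI impI)
    show "bounded_linear (\<lambda>h. \<Sum>i\<in>Basis. (h \<bullet> i) *\<^sub>R I_op u \<alpha> (dir_deriv i \<psi>) x)"
      by (intro bounded_linear_sum bounded_linear_compose[OF bounded_linear_scaleR_left] bounded_linear_inner_left)
    fix e :: real assume e: "0 < e"
    define d where "d = e / (\<bar>K * E\<bar> + 1)"
    have d0: "0 < d" using e by (simp add: d_def add_pos_nonneg)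
    show "\<exists>d>0. \<forall>y. norm (y - x) < d \<longrightarrow>
       norm (I_op u \<alpha> \<psi> y - I_op u \<alpha> \<psi> x - (\<Sum>i\<in>Basis. ((y - x) \<bullet> i) *\<^sub>R I_op u \<alpha> (dir_deriv i \<psi>) x)) \<le> e * norm (y - x)"
    proof (intro exI[of _ d] conjI allI impI d0)
      fix y assume y: "norm (y - x) < d"
      have "\<bar>K * E\<bar> * norm (y - x) \<le> \<bar>K * E\<bar> * d" using y by (intro mult_left_mono) auto
      also have "\<dots> \<le> e" using e by (simp add: d_def field_simps)
      finally have "K * E * norm (y - x) \<le> e" by (smt (verit) abs_ge_self mult_right_mono norm_ge_zero)
      then have "norm (y - x) * (K * norm (y - x)) * E \<le> e * norm (y - x)"
        by (smt (verit, ccfv_SIG) mult.commute mult.left_commute mult_right_mono norm_ge_zero)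
      then show "norm (I_op u \<alpha> \<psi> y - I_op u \<alpha> \<psi> x - (\<Sum>i\<in>Basis. ((y - x) \<bullet> i) *\<^sub>R I_op u \<alpha> (dir_deriv i \<psi>) x)) \<le> e * norm (y - x)"
        using key[of "y - x"] by (simp add: g_def)
    qed
  qed
qed



lemma sn_bound:
  assumes "\<phi> \<in> schwartz" "set ws \<subseteq> Basis"
  shows "(1 + norm x) ^ N * cmod (iter_deriv ws \<phi> x) \<le> schwartz_seminorm N ws \<phi>"
    and "0 \<le> schwartz_seminorm N ws \<phi>"
proof -
  have "bounded (range (\<lambda>x. (1 + norm x) ^ N * cmod (iter_deriv ws \<phi> x)))"
    using assms unfolding schwartz_def by blast
  then have bd: "bdd_above (range (\<lambda>x. (1 + norm x) ^ N * cmod (iter_deriv ws \<phi> x)))"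
    by (rule bounded_imp_bdd_above)
  show 1: "(1 + norm x) ^ N * cmod (iter_deriv ws \<phi> x) \<le> schwartz_seminorm N ws \<phi>" for x
    unfolding schwartz_seminorm_def by (rule cSUP_upper[OF _ bd]) auto
  have "0 \<le> (1 + norm x) ^ N * cmod (iter_deriv ws \<phi> x)" by simp
  then show "0 \<le> schwartz_seminorm N ws \<phi>" using 1 by (rule order_trans)
qed

lemma sn_bound0:
  assumes "\<phi> \<in> schwartz" "set ws \<subseteq> Basis"
  shows "cmod (iter_deriv ws \<phi> x) \<le> schwartz_seminorm 0 ws \<phi>"
  using sn_bound(1)[OF assms, where N=0 and x=x] by simp

lemma sch_diff:
  assumes "\<phi> \<in> schwartz" "set ws \<subseteq> Basis"
  shows "iter_deriv ws \<phi> differentiable (at x)"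
  using assms unfolding schwartz_def by blast

lemma I_good:
  fixes \<phi> :: "'a::euclidean_space \<Rightarrow> complex"
  assumes u: "norm u = 1" and a: "Re \<alpha> < 0" and \<phi>: "\<phi> \<in> schwartz" and vs: "set vs \<subseteq> Basis"
  shows "(I_op u \<alpha> (iter_deriv vs \<phi>) has_derivative
           (\<lambda>h. \<Sum>i\<in>Basis. (h \<bullet> i) *\<^sub>R I_op u \<alpha> (dir_deriv i (iter_deriv vs \<phi>)) x)) (at x)"
proof (rule I_has_derivative[OF u a])
  show "iter_deriv vs \<phi> differentiable (at x)" for x by (rule sch_diff[OF \<phi> vs])
  show "dir_deriv i (iter_deriv vs \<phi>) differentiable (at x)" if "i \<in> Basis" for i x
    using sch_diff[OF \<phi>, of "i # vs"] that vs by simp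
  show "norm (iter_deriv vs \<phi> y) \<le> schwartz_seminorm 0 vs \<phi>" for y
    by (rule sn_bound0[OF \<phi> vs])
  show "norm (dir_deriv i (iter_deriv vs \<phi>) y) \<le> (\<Sum>k\<in>Basis. schwartz_seminorm 0 (k # vs) \<phi>)"
    if i: "i \<in> Basis" for i y
  proof -
    have "norm (dir_deriv i (iter_deriv vs \<phi>) y) \<le> schwartz_seminorm 0 (i # vs) \<phi>"
      using sn_bound0[OF \<phi>, of "i # vs"] i vs by simp
    also have "\<dots> \<le> (\<Sum>k\<in>Basis. schwartz_seminorm 0 (k # vs) \<phi>)"
      by (rule member_le_sum[OF i]) (use sn_bound(2)[OF \<phi>] vs in auto)
    finally show ?thesis .
  qed
  show "norm (dir_deriv j (dir_deriv i (iter_deriv vs \<phi>)) y)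
      \<le> (\<Sum>k\<in>Basis. \<Sum>l\<in>Basis. schwartz_seminorm 0 (l # k # vs) \<phi>)"
    if i: "i \<in> Basis" and j: "j \<in> Basis" for i j y
  proof -
    have "norm (dir_deriv j (dir_deriv i (iter_deriv vs \<phi>)) y) \<le> schwartz_seminorm 0 (j # i # vs) \<phi>"
      using sn_bound0[OF \<phi>, of "j # i # vs"] i j vs by simp
    also have "\<dots> \<le> (\<Sum>l\<in>Basis. schwartz_seminorm 0 (l # i # vs) \<phi>)"
      by (rule member_le_sum[OF j]) (use sn_bound(2)[OF \<phi>] vs i in auto)
    also have "\<dots> \<le> (\<Sum>k\<in>Basis. \<Sum>l\<in>Basis. schwartz_seminorm 0 (l # k # vs) \<phi>)"
      by (rule member_le_sum[OF i]) (use sn_bound(2)[OF \<phi>] vs in \<open>auto intro!: sum_nonneg\<close>)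
    finally show ?thesis .
  qed
qed

lemma dir_deriv_I_gen:
  fixes \<psi> :: "'a::euclidean_space \<Rightarrow> complex"
  assumes D: "\<And>x. (I_op u \<alpha> \<psi> has_derivative (\<lambda>h. \<Sum>i\<in>Basis. (h \<bullet> i) *\<^sub>R I_op u \<alpha> (dir_deriv i \<psi>) x)) (at x)"
    and a: "Re \<alpha> < 0"
    and d\<psi>: "\<And>x. \<psi> differentiable (at x)"
    and dg: "\<And>i x. i \<in> Basis \<Longrightarrow> dir_deriv i \<psi> differentiable (at x)"
    and B1: "\<And>i y. i \<in> Basis \<Longrightarrow> norm (dir_deriv i \<psi> y) \<le> B1"
  shows "dir_deriv v (I_op u \<alpha> \<psi>) x = I_op u \<alpha> (dir_deriv v \<psi>) x"
proof -
  have "frechet_derivative (I_op u \<alpha> \<psi>) (at x) = (\<lambda>h. \<Sum>i\<in>Basis. (h \<bullet> i) *\<^sub>R I_op u \<alpha> (dir_deriv i \<psi>) x)"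
    by (rule frechet_derivative_at[OF D, symmetric])
  then have 1: "dir_deriv v (I_op u \<alpha> \<psi>) x = (\<Sum>i\<in>Basis. (v \<bullet> i) *\<^sub>R I_op u \<alpha> (dir_deriv i \<psi>) x)"
    by (simp add: dir_deriv_def)
  have ig: "set_integrable lborel {0..} (\<lambda>t. exp (\<alpha> * complex_of_real t) * dir_deriv i \<psi> (x - t *\<^sub>R u))"
    if "i \<in> Basis" for i
    by (rule integ_cont[OF cont_of_diff _ a]) (use dg B1 that in auto)
  have "I_op u \<alpha> (dir_deriv v \<psi>) x
     = (LINT t:{0..}|lborel. (\<Sum>i\<in>Basis. (v \<bullet> i) *\<^sub>R (exp (\<alpha> * complex_of_real t) * dir_deriv i \<psi> (x - t *\<^sub>R u))))"
    unfolding I_op_eq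
    by (intro set_lebesgue_integral_cong)
       (auto simp: fd_sum[OF d\<psi>, of _ v, unfolded dir_deriv_def[of v]] dir_deriv_def[of v] sum_distrib_left scaleR_conv_of_real mult_ac)
  also have "\<dots> = (\<Sum>i\<in>Basis. LINT t:{0..}|lborel. (v \<bullet> i) *\<^sub>R (exp (\<alpha> * complex_of_real t) * dir_deriv i \<psi> (x - t *\<^sub>R u)))"
    by (rule conjunct2[OF set_integral_sum]) (use ig in auto)
  also have "\<dots> = (\<Sum>i\<in>Basis. (v \<bullet> i) *\<^sub>R I_op u \<alpha> (dir_deriv i \<psi>) x)"
    by (simp add: I_op_eq)
  finally show ?thesis using 1 by simp
qed



lemma B1_sch:
  assumes \<phi>: "\<phi> \<in> schwartz" and vs: "set vs \<subseteq> Basis" and i: "i \<in> Basis"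
  shows "norm (dir_deriv i (iter_deriv vs \<phi>) y) \<le> (\<Sum>k\<in>Basis. schwartz_seminorm 0 (k # vs) \<phi>)"
proof -
  have "norm (dir_deriv i (iter_deriv vs \<phi>) y) \<le> schwartz_seminorm 0 (i # vs) \<phi>"
    using sn_bound0[OF \<phi>, of "i # vs"] i vs by simp
  also have "\<dots> \<le> (\<Sum>k\<in>Basis. schwartz_seminorm 0 (k # vs) \<phi>)"
    by (rule member_le_sum[OF i]) (use sn_bound(2)[OF \<phi>] vs in auto)
  finally show ?thesis .
qed

lemma dd_I_sch:
  assumes u: "norm u = 1" and a: "Re \<alpha> < 0" and \<phi>: "\<phi> \<in> schwartz" and vs: "set vs \<subseteq> Basis"
  shows "dir_deriv v (I_op u \<alpha> (iter_deriv vs \<phi>)) x = I_op u \<alpha> (dir_deriv v (iter_deriv vs \<phi>)) x"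
  by (rule dir_deriv_I_gen[OF I_good[OF u a \<phi> vs] a sch_diff[OF \<phi> vs]])
     (use sch_diff[OF \<phi>, of "_ # vs"] vs B1_sch[OF \<phi> vs] in auto)

lemma iter_I:
  assumes u: "norm u = 1" and a: "Re \<alpha> < 0" and \<phi>: "\<phi> \<in> schwartz"
  shows "set vs \<subseteq> Basis \<Longrightarrow> iter_deriv vs (I_op u \<alpha> \<phi>) = I_op u \<alpha> (iter_deriv vs \<phi>)"
proof (induction vs)
  case Nil
  then show ?case by simp
next
  case (Cons v vs)
  then have vs: "set vs \<subseteq> Basis" by simp
  have "iter_deriv (v # vs) (I_op u \<alpha> \<phi>) = dir_deriv v (I_op u \<alpha> (iter_deriv vs \<phi>))"
    using Cons.IH[OF vs] by simp
  also have "\<dots> = I_op u \<alpha> (iter_deriv (v # vs) \<phi>)"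
    by (rule ext, subst dd_I_sch[OF u a \<phi> vs]) simp
  finally show ?case .
qed

lemma ftc_identity:
  fixes \<phi> :: "'a::euclidean_space \<Rightarrow> complex"
  assumes a: "Re \<alpha> < 0" and \<phi>: "\<phi> \<in> schwartz"
  shows "I_op u \<alpha> (\<lambda>x. dir_deriv u \<phi> x - \<alpha> * \<phi> x) x = \<phi> x"
proof -
  have d0: "\<phi> differentiable (at y)" for y using sch_diff[OF \<phi>, of "[]"] by simp
  define Du where "Du y = (\<Sum>i\<in>Basis. (u \<bullet> i) *\<^sub>R dir_deriv i \<phi> y)" for y
  have Du_eq: "dir_deriv u \<phi> y = Du y" for y
    unfolding Du_def using fd_sum[OF d0, of y u] by (simp add: dir_deriv_def)
  have cDu: "continuous_on UNIV Du"
    unfolding Du_def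
    by (intro continuous_intros cont_of_diff) (use sch_diff[OF \<phi>, of "[_]"] in auto)
  have c\<phi>: "continuous_on UNIV \<phi>" by (rule cont_of_diff[OF d0])
  define B1 where "B1 = (\<Sum>k\<in>Basis. schwartz_seminorm 0 [k] \<phi>)"
  have bDu: "norm (Du y) \<le> real DIM('a) * B1 * norm u" for y
    unfolding Du_def by (rule sum_basis_bound) (use B1_sch[OF \<phi>, of "[]"] in \<open>auto simp: B1_def\<close>)
  define f where "f = (\<lambda>t. exp (\<alpha> * complex_of_real t) * (Du (x - t *\<^sub>R u) - \<alpha> * \<phi> (x - t *\<^sub>R u)))"
  define G where "G = (\<lambda>t. - (exp (\<alpha> * complex_of_real t) * \<phi> (x - t *\<^sub>R u)))"
  have cf: "continuous_on UNIV f"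
    unfolding f_def by (intro continuous_intros continuous_on_compose2[OF cDu] continuous_on_compose2[OF c\<phi>]) auto
  have b\<phi>: "norm (\<phi> y) \<le> schwartz_seminorm 0 [] \<phi>" for y using sn_bound0[OF \<phi>, of "[]"] by simp
  have fi: "set_integrable lborel {0..} f"
  proof -
    have "set_integrable lborel {0..} (\<lambda>t. exp (\<alpha> * complex_of_real t) * (\<lambda>y. Du y - \<alpha> * \<phi> y) (x - t *\<^sub>R u))"
    proof (rule integ_cont[OF _ _ a])
      show "continuous_on UNIV (\<lambda>y. Du y - \<alpha> * \<phi> y)" by (intro continuous_intros cDu c\<phi>)
      show "norm (Du y - \<alpha> * \<phi> y) \<le> real DIM('a) * B1 * norm u + norm \<alpha> * schwartz_seminorm 0 [] \<phi>" for y
      proof -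
        have "norm (Du y - \<alpha> * \<phi> y) \<le> norm (Du y) + norm \<alpha> * norm (\<phi> y)"
          by (metis norm_mult norm_triangle_ineq4)
        also have "\<dots> \<le> real DIM('a) * B1 * norm u + norm \<alpha> * schwartz_seminorm 0 [] \<phi>"
          by (intro add_mono bDu mult_left_mono b\<phi>) auto
        finally show ?thesis .
      qed
    qed
    then show ?thesis by (simp add: f_def)
  qed
  have lhs: "I_op u \<alpha> (\<lambda>x. dir_deriv u \<phi> x - \<alpha> * \<phi> x) x = (LINT t:{0..}|lborel. f t)"
    by (simp add: I_op_eq f_def Du_eq)
  have "(LINT t:{0..}|lborel. f t) = (LINT t:{0<..}|lborel. f t)"
  proof (rule set_integral_cong_set)
    show "set_borel_measurable lborel {0<..} f" unfolding set_borel_measurable_def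
      using borel_measurable_continuous_onI[OF cf] by measurable
    show "set_borel_measurable lborel {0..} f" unfolding set_borel_measurable_def
      using borel_measurable_continuous_onI[OF cf] by measurable
    show "AE t in lborel. ((t::real) \<in> {0<..}) = (t \<in> {0..})"
      using AE_lborel_singleton[of "0::real"] by (rule eventually_mono) auto
  qed
  also have "\<dots> = (LBINT t=ereal 0..\<infinity>. f t)"
    by (rule interval_integral_to_infinity_eq[symmetric])
  also have "\<dots> = 0 - (- \<phi> x)"
  proof (rule interval_integral_FTC_integrable[where F=G])
    show "ereal 0 < \<infinity>" by simp
    show "(G has_vector_derivative f t) (at t)" if "ereal 0 < ereal t" "ereal t < \<infinity>" for t
    proof -
      have e: "((\<lambda>s. exp (\<alpha> * complex_of_real s)) has_vector_derivative (\<alpha> * exp (\<alpha> * complex_of_real t))) (at t)"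
        by (rule has_vector_derivative_real_field[where f="\<lambda>z. exp (\<alpha> * z)"])
           (auto intro!: derivative_eq_intros)
      have lin: "linear (frechet_derivative \<phi> (at (x - t *\<^sub>R u)))"
        using d0 frechet_derivative_works has_derivative_linear by blast
      have "((\<phi> \<circ> (\<lambda>s. x - s *\<^sub>R u)) has_derivative (frechet_derivative \<phi> (at (x - t *\<^sub>R u)) \<circ> (\<lambda>s. - (s *\<^sub>R u)))) (at t)"
        by (rule diff_chain_at) (auto intro!: derivative_eq_intros simp: frechet_derivative_works[THEN iffD1, OF d0])
      moreover have "(frechet_derivative \<phi> (at (x - t *\<^sub>R u)) \<circ> (\<lambda>s. - (s *\<^sub>R u))) = (\<lambda>s. s *\<^sub>R (- Du (x - t *\<^sub>R u)))"
        by (rule ext) (simp add: linear_neg[OF lin] linear_scale[OF lin] Du_eq[symmetric] dir_deriv_def)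
      ultimately have p: "((\<lambda>s. \<phi> (x - s *\<^sub>R u)) has_vector_derivative (- Du (x - t *\<^sub>R u))) (at t)"
        by (simp add: has_vector_derivative_def o_def)
      have "(G has_vector_derivative - (exp (\<alpha> * complex_of_real t) * (- Du (x - t *\<^sub>R u)) + \<alpha> * exp (\<alpha> * complex_of_real t) * \<phi> (x - t *\<^sub>R u))) (at t)"
        unfolding G_def by (intro has_vector_derivative_minus has_vector_derivative_mult e p)
      moreover have "- (exp (\<alpha> * complex_of_real t) * (- Du (x - t *\<^sub>R u)) + \<alpha> * exp (\<alpha> * complex_of_real t) * \<phi> (x - t *\<^sub>R u)) = f t"
        by (simp add: f_def algebra_simps)
      ultimately show ?thesis by simp
    qed
    show "isCont f t" for t using cf by (simp add: continuous_on_eq_continuous_at)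
    show "set_integrable lborel (einterval (ereal 0) \<infinity>) f"
      by (rule set_integrable_subset[OF fi]) auto
    have cG: "continuous_on UNIV G"
      unfolding G_def by (intro continuous_intros continuous_on_compose2[OF c\<phi>]) auto
    have "(G \<longlongrightarrow> G 0) (at 0)" using cG by (simp add: continuous_on_eq_continuous_at isCont_def)
    then have "(G \<longlongrightarrow> - \<phi> x) (at 0)" by (simp add: G_def)
    then have "(G \<longlongrightarrow> - \<phi> x) (at_right 0)" by (rule tendsto_within_subset) auto
    then show "((G \<circ> real_of_ereal) \<longlongrightarrow> - \<phi> x) (at_right (ereal 0))"
      by (simp add: ereal_tendsto_simps1)
    have "(G \<longlongrightarrow> 0) at_top"
    proof (rule Lim_null_comparison)
      show "\<forall>\<^sub>F t in at_top. norm (G t) \<le> schwartz_seminorm 0 [] \<phi> * exp (Re \<alpha> * t)"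
        by (intro always_eventually allI) (simp add: G_def norm_mult b\<phi> mult.commute)
      have "LIM t at_top. Re \<alpha> * t :> at_bot"
        by (rule filterlim_tendsto_neg_mult_at_bot[OF tendsto_const a filterlim_ident])
      then have "((\<lambda>t. exp (Re \<alpha> * t)) \<longlongrightarrow> 0) at_top"
        by (rule filterlim_compose[OF exp_at_bot])
      then show "((\<lambda>t. schwartz_seminorm 0 [] \<phi> * exp (Re \<alpha> * t)) \<longlongrightarrow> 0) at_top"
        by (rule tendsto_mult_right_zero)
    qed
    then show "((G \<circ> real_of_ereal) \<longlongrightarrow> 0) (at_left \<infinity>)"
      by (simp add: ereal_tendsto_simps1)
  qed
  finally show ?thesis using lhs by simp
qed



lemma W_nonneg: "0 \<le> W \<alpha> N"
  unfolding W_def set_lebesgue_integral_def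
  by (rule Bochner_Integration.integral_nonneg) (auto simp: indicator_def)

lemma I_schwartz_bound:
  assumes u: "norm u = 1" and a: "Re \<alpha> < 0" and \<phi>: "\<phi> \<in> schwartz" and vs: "set vs \<subseteq> Basis"
  shows "(1 + norm x) ^ N * cmod (iter_deriv vs (I_op u \<alpha> \<phi>) x) \<le> schwartz_seminorm N vs \<phi> * W \<alpha> N"
  unfolding iter_I[OF u a \<phi> vs]
  by (rule weighted_bound[OF u a cont_of_diff[OF sch_diff[OF \<phi> vs]]]) (rule sn_bound(1)[OF \<phi> vs])

theorem proposition4p4:
  fixes u :: "'a::euclidean_space" and \<alpha> :: complex
  assumes "norm u = 1" and "Re \<alpha> < 0"
  shows "(\<forall>\<phi>\<in>schwartz. I_op u \<alpha> \<phi> \<in> schwartz)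
    \<and> (\<forall>\<phi>\<in>schwartz. \<forall>\<psi>\<in>schwartz. \<forall>a b::complex.
          I_op u \<alpha> (\<lambda>x. a * \<phi> x + b * \<psi> x) = (\<lambda>x. a * I_op u \<alpha> \<phi> x + b * I_op u \<alpha> \<psi> x))
    \<and> (\<forall>\<phi>\<in>schwartz. \<forall>x0. I_op u \<alpha> (\<lambda>x. \<phi> (x - x0)) = (\<lambda>x. I_op u \<alpha> \<phi> (x - x0)))
    \<and> schwartz_continuous (I_op u \<alpha>)
    \<and> (\<forall>\<phi>\<in>schwartz.
          I_op u \<alpha> (\<lambda>x. dir_deriv u \<phi> x - \<alpha> * \<phi> x) = \<phi>
        \<and> (\<lambda>x. dir_deriv u (I_op u \<alpha> \<phi>) x - \<alpha> * I_op u \<alpha> \<phi> x) = \<phi>)"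
proof (intro conjI ballI allI)
  note u = assms(1) and a = assms(2)
  have integ: "set_integrable lborel {0..} (\<lambda>t. exp (\<alpha> * complex_of_real t) * \<phi> (x - t *\<^sub>R u))"
    if \<phi>: "\<phi> \<in> schwartz" for \<phi> :: "'a \<Rightarrow> complex" and x
    by (rule integ_cont[OF cont_of_diff[OF sch_diff[OF \<phi>, of "[]", simplified]] _ a])
       (use sn_bound0[OF \<phi>, of "[]"] in simp)
  show "I_op u \<alpha> \<phi> \<in> schwartz" if \<phi>: "\<phi> \<in> schwartz" for \<phi>
    unfolding schwartz_def
  proof (intro CollectI allI impI conjI)
    fix vs :: "'a list" and N :: nat and x assume vs: "set vs \<subseteq> Basis"
    show "iter_deriv vs (I_op u \<alpha> \<phi>) differentiable (at x)"
      unfolding iter_I[OF u a \<phi> vs] using I_good[OF u a \<phi> vs] by (rule differentiableI)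
  next
    fix vs :: "'a list" and N :: nat assume vs: "set vs \<subseteq> Basis"
    show "bounded (range (\<lambda>x. (1 + norm x) ^ N * cmod (iter_deriv vs (I_op u \<alpha> \<phi>) x)))"
      by (rule boundedI[where B="schwartz_seminorm N vs \<phi> * W \<alpha> N"])
         (use I_schwartz_bound[OF u a \<phi> vs] in auto)
  qed
  show "I_op u \<alpha> (\<lambda>x. c * \<phi> x + d * \<psi> x) = (\<lambda>x. c * I_op u \<alpha> \<phi> x + d * I_op u \<alpha> \<psi> x)"
    if \<phi>: "\<phi> \<in> schwartz" and \<psi>: "\<psi> \<in> schwartz" for \<phi> \<psi> c d
  proof
    fix x
    have "I_op u \<alpha> (\<lambda>x. c * \<phi> x + d * \<psi> x) x
       = (LINT t:{0..}|lborel. c * (exp (\<alpha> * complex_of_real t) * \<phi> (x - t *\<^sub>R u))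
             + d * (exp (\<alpha> * complex_of_real t) * \<psi> (x - t *\<^sub>R u)))"
      by (simp add: I_op_eq algebra_simps)
    also have "\<dots> = c * I_op u \<alpha> \<phi> x + d * I_op u \<alpha> \<psi> x"
      using integ[OF \<phi>, of x] integ[OF \<psi>, of x] by (simp add: I_op_eq)
    finally show "I_op u \<alpha> (\<lambda>x. c * \<phi> x + d * \<psi> x) x = c * I_op u \<alpha> \<phi> x + d * I_op u \<alpha> \<psi> x" .
  qed
  show "I_op u \<alpha> (\<lambda>x. \<phi> (x - x0)) = (\<lambda>x. I_op u \<alpha> \<phi> (x - x0))" for \<phi> x0
    by (rule ext) (simp add: I_op_eq algebra_simps)
  show "schwartz_continuous (I_op u \<alpha>)"
    unfolding schwartz_continuous_def
  proof (intro allI impI)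
    fix N and vs :: "'a list" assume vs: "set vs \<subseteq> Basis"
    show "\<exists>M k C. \<forall>f\<in>schwartz. schwartz_seminorm N vs (I_op u \<alpha> f) \<le>
           C * (\<Sum>(N', ws)\<in>{..M} \<times> {ws. set ws \<subseteq> Basis \<and> length ws \<le> k}. schwartz_seminorm N' ws f)"
    proof (intro exI ballI)
      fix f :: "'a \<Rightarrow> complex" assume f: "f \<in> schwartz"
      have "schwartz_seminorm N vs (I_op u \<alpha> f) \<le> schwartz_seminorm N vs f * W \<alpha> N"
        unfolding schwartz_seminorm_def[of N vs "I_op u \<alpha> f"]
        by (rule cSUP_least) (use I_schwartz_bound[OF u a f vs] in auto)
      also have "\<dots> \<le> (\<Sum>(N', ws)\<in>{..N} \<times> {ws. set ws \<subseteq> Basis \<and> length ws \<le> length vs}. schwartz_seminorm N' ws f) * W \<alpha> N"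
      proof (rule mult_right_mono[OF _ W_nonneg])
        have fin: "finite ({..N} \<times> {ws::'a list. set ws \<subseteq> Basis \<and> length ws \<le> length vs})"
          by (intro finite_cartesian_product finite_lists_length_le) auto
        have "schwartz_seminorm N vs f = (\<lambda>(N', ws). schwartz_seminorm N' ws f) (N, vs)" by simp
        also have "\<dots> \<le> (\<Sum>(N', ws)\<in>{..N} \<times> {ws. set ws \<subseteq> Basis \<and> length ws \<le> length vs}. schwartz_seminorm N' ws f)"
          by (rule member_le_sum[OF _ _ fin]) (use vs sn_bound(2)[OF f] in auto)
        finally show "schwartz_seminorm N vs f \<le> (\<Sum>(N', ws)\<in>{..N} \<times> {ws. set ws \<subseteq> Basis \<and> length ws \<le> length vs}. schwartz_seminorm N' ws f)" .
      qed
      finally show "schwartz_seminorm N vs (I_op u \<alpha> f) \<le> W \<alpha> N * (\<Sum>(N', ws)\<in>{..N} \<times> {ws. set ws \<subseteq> Basis \<and> length ws \<le> length vs}. schwartz_seminorm N' ws f)"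
        by (simp add: mult.commute)
    qed
  qed
  show "I_op u \<alpha> (\<lambda>x. dir_deriv u \<phi> x - \<alpha> * \<phi> x) = \<phi>" if \<phi>: "\<phi> \<in> schwartz" for \<phi>
    by (rule ext, rule ftc_identity[OF a \<phi>])
  show "(\<lambda>x. dir_deriv u (I_op u \<alpha> \<phi>) x - \<alpha> * I_op u \<alpha> \<phi> x) = \<phi>" if \<phi>: "\<phi> \<in> schwartz" for \<phi>
  proof
    fix x
    have dd: "dir_deriv u (I_op u \<alpha> \<phi>) x = I_op u \<alpha> (dir_deriv u \<phi>) x"
      using dd_I_sch[OF u a \<phi>, of "[]" u x] by simp
    have d0: "\<phi> differentiable (at y)" for y using sch_diff[OF \<phi>, of "[]"] by simp
    have iD: "set_integrable lborel {0..} (\<lambda>t. exp (\<alpha> * complex_of_real t) * dir_deriv u \<phi> (x - t *\<^sub>R u))"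
    proof -
      have eq: "dir_deriv u \<phi> = (\<lambda>y. \<Sum>i\<in>Basis. (u \<bullet> i) *\<^sub>R dir_deriv i \<phi> y)"
        using fd_sum[OF d0] by (auto simp: dir_deriv_def[of u])
      show ?thesis unfolding eq
      proof (rule integ_cont[OF _ _ a])
        show "continuous_on UNIV (\<lambda>y. \<Sum>i\<in>Basis. (u \<bullet> i) *\<^sub>R dir_deriv i \<phi> y)"
          by (intro continuous_intros cont_of_diff) (use sch_diff[OF \<phi>, of "[_]"] in auto)
        show "norm (\<Sum>i\<in>Basis. (u \<bullet> i) *\<^sub>R dir_deriv i \<phi> y) \<le> real DIM('a) * (\<Sum>k\<in>Basis. schwartz_seminorm 0 [k] \<phi>) * norm u" for y
          by (rule sum_basis_bound) (use B1_sch[OF \<phi>, of "[]"] in auto)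
      qed
    qed
    have "dir_deriv u (I_op u \<alpha> \<phi>) x - \<alpha> * I_op u \<alpha> \<phi> x
        = (LINT t:{0..}|lborel. exp (\<alpha> * complex_of_real t) * dir_deriv u \<phi> (x - t *\<^sub>R u)
             - \<alpha> * (exp (\<alpha> * complex_of_real t) * \<phi> (x - t *\<^sub>R u)))"
      using iD integ[OF \<phi>, of x] by (simp add: dd I_op_eq)
    also have "\<dots> = I_op u \<alpha> (\<lambda>x. dir_deriv u \<phi> x - \<alpha> * \<phi> x) x"
      by (simp add: I_op_eq algebra_simps)
    also have "\<dots> = \<phi> x" by (rule ftc_identity[OF a \<phi>])
    finally show "dir_deriv u (I_op u \<alpha> \<phi>) x - \<alpha> * I_op u \<alpha> \<phi> x = \<phi> x" .
  qed
qed

end
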